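(* In the process algebra $\mathcal{G}$ described in the context, suppose $C\|Z\mathbb{P}_v^{1}\approx C\|Z\mathbb{P}_v^{2}\mathbb{P}_u^{2}$ for some $\mathbb{P}_v^{1},\mathbb{P}_v^{2}$ (each a possibly empty sequential composition of constants from $\{V_k:k\in\mathcal{N}\}$) and some nonempty sequential composition $\mathbb{P}_u^{2}\neq\epsilon$ of constants from $\{U_k:k\in\mathcal{N}\}$. Then INST has a solution.
   Context: Process algebras: a triple $(\mathcal{C},\mathcal{A},\Delta)$ of finitely many constants, actions (including silent $\tau$) and rules $X\stackrel{\ell}{\longrightarrow}P$. Processes: $P::=\epsilon\mid X\mid PP'\mid P\|P'$, sequential composition associative, parallel composition associative and commutative, $\epsilon$ a unit for both. Semantics: rules of $\Delta$; if $P\stackrel{\ell}{\longrightarrow}P'$ then $PQ\stackrel{\ell}{\longrightarrow}P'Q$, $P\|Q\stackrel{\ell}{\longrightarrow}P'\|Q$, $Q\|P\stackrel{\ell}{\longrightarrow}Q\|P'$. $\Longrightarrow$ is the reflexive transitive closure of $\stackrel{\tau}{\longrightarrow}$; $\stackrel{\widehat{\ell}}{\Longrightarrow}$ is $\Longrightarrow\stackrel{\ell}{\longrightarrow}\Longrightarrow$ if $\ell\ne\tau$ and $\Longrightarrow$ if $\ell=\tau$. Weak bisimilarity $\approx$ is the largest relation $\mathcal{B}$ such that whenever $P\mathcal{B}Q$ and $P\stackrel{\ell}{\longrightarrow}P'$ there is $Q'$ with $Q\stackrel{\widehat{\ell}}{\Longrightarrow}Q'$, $P'\mathcal{B}Q'$,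 and symmetrically. The algebra $\mathcal{G}$: fix a finite alphabet $\Sigma$ with $|\Sigma|\ge2$ and a Post Correspondence instance $\mathrm{INST}=\{(u_1,v_1),\dots,(u_n,v_n)\}$ with $u_k,v_k\in\Sigma^{+}$; INST has a solution if there exist $m\ge1$ and $i_1,\dots,i_m\in\{1,\dots,n\}$ with $u_{i_1}\cdots u_{i_m}=v_{i_1}\cdots v_{i_m}$. Let $\mathcal{N}=\{1,\dots,n\}$. Actions: $\{\lambda_U,\lambda_V,\lambda_D,\lambda_I,\lambda_S,\lambda_Z\}\cup\mathcal{N}\cup\Sigma\cup\{\tau\}$. Constants: $X,Y,Z,I,S,C,C',D,G,G',G_u,G_v,G_v'$, $U_k,V_k$ ($k\in\mathcal{N}$), and $W(\omega,k),W(\omega,0)$ for $k\in\mathcal{N}$ and $\omega$ a (possibly empty) suffix of $u_k$ or of $v_k$; $\mathcal{W}$ is the set of these $W$-constants. Rules (with $k$ ranging over $\mathcal{N}$, $a$ over $\Sigma$, $W$ over $\mathcal{W}$): $X\stackrel{\lambda_U}{\longrightarrow}D\|G_v$, $X\stackrel{\tau}{\longrightarrow}D$, $Y\stackrel{\tau}{\longrightarrow}D$, $D\stackrel{\tau}{\longrightarrow}D\|G_u$, $D\stackrel{\lambda_D}{\longrightarrow}C$; $G_u\stackrel{\tau}{\longrightarrow}G_uU_k$, $G_u\stackrel{\lambda_U}{\longrightarrow}G_vU_k$, $G_u\stackrel{\tau}{\longrightarrow}G_v'$, $G_v'\stackrel{\tau}{\longrightarrow}G_v'V_k$, $G_v'\stackrel{\tau}{\longrightarrow}Z$;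 $G_v\stackrel{\tau}{\longrightarrow}G_vV_k$, $G_v\stackrel{\tau}{\longrightarrow}\epsilon$, $G_v\stackrel{\lambda_V}{\longrightarrow}Z$, $Z\stackrel{\tau}{\longrightarrow}\epsilon$, $Z\stackrel{\lambda_Z}{\longrightarrow}\epsilon$; $C\stackrel{\lambda_I}{\longrightarrow}I$, $C\stackrel{\lambda_S}{\longrightarrow}S$, $C\stackrel{\tau}{\longrightarrow}C\|G$, $C\stackrel{\tau}{\longrightarrow}C\|G_v$; $G\stackrel{\tau}{\longrightarrow}GU_k$, $G\stackrel{\tau}{\longrightarrow}GV_k$, $G\stackrel{\tau}{\longrightarrow}\epsilon$; $I\stackrel{\lambda_I}{\longrightarrow}C'$, $I\stackrel{k}{\longrightarrow}I$, $S\stackrel{\lambda_S}{\longrightarrow}C'$, $S\stackrel{a}{\longrightarrow}S$, $C'\stackrel{\tau}{\longrightarrow}C'\|G'$, $C'\stackrel{\tau}{\longrightarrow}\epsilon$; $G'\stackrel{\tau}{\longrightarrow}G'U_k$, $G'\stackrel{\tau}{\longrightarrow}G'V_k$, $G'\stackrel{\tau}{\longrightarrow}G'W$, $G'\stackrel{\tau}{\longrightarrow}G_v$, $G'\stackrel{\tau}{\longrightarrow}Z$; $U_k\stackrel{\tau}{\longrightarrow}W(u_k,k)$, $V_k\stackrel{\tau}{\longrightarrow}W(v_k,k)$; $W(a\omega,k)\stackrel{a}{\longrightarrow}W(\omega,k)$, $W(a\omega,0)\stackrel{a}{\longrightarrow}W(\omega,0)$, $W(\omega,k)\stackrel{k}{\longrightarrow}W(\omega,0)$,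 $W(a\omega,k)\stackrel{\tau}{\longrightarrow}W(\omega,k)$, $W(a\omega,0)\stackrel{\tau}{\longrightarrow}W(\omega,0)$, $W(\omega,k)\stackrel{\tau}{\longrightarrow}W(\omega,0)$, $W(\epsilon,0)\stackrel{\tau}{\longrightarrow}\epsilon$. *)

theory Defs
  imports Main "HOL-Library.Sublist" "HOL-Library.Cardinality"
begin

datatype 'c proc = Eps | Cst 'c | Seq "'c proc" "'c proc" | Par "'c proc" "'c proc"

datatype 'a lab = Tau | Act 'a

inductive scong :: "'c proc \<Rightarrow> 'c proc \<Rightarrow> bool" where
  sc_refl: "scong P P"
| sc_sym: "scong P Q \<Longrightarrow> scong Q P"
| sc_trans: "scong P Q \<Longrightarrow> scong Q R \<Longrightarrow> scong P R"
| sc_seq_assoc: "scong (Seq (Seq P Q) R) (Seq P (Seq Q R))"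
| sc_par_assoc: "scong (Par (Par P Q) R) (Par P (Par Q R))"
| sc_par_comm: "scong (Par P Q) (Par Q P)"
| sc_seq_unitl: "scong (Seq Eps P) P"
| sc_seq_unitr: "scong (Seq P Eps) P"
| sc_par_unit: "scong (Par Eps P) P"
| sc_seq_cong: "scong P P' \<Longrightarrow> scong Q Q' \<Longrightarrow> scong (Seq P Q) (Seq P' Q')"
| sc_par_cong: "scong P P' \<Longrightarrow> scong Q Q' \<Longrightarrow> scong (Par P Q) (Par P' Q')"

inductive step :: "('c \<times> 'a lab \<times> 'c proc) set \<Rightarrow> 'c proc \<Rightarrow> 'a lab \<Rightarrow> 'c proc \<Rightarrow> bool"
  for \<Delta> :: "('c \<times> 'a lab \<times> 'c proc) set" where
  st_rule: "(X, l, P) \<in> \<Delta> \<Longrightarrow> step \<Delta> (Cst X) l P"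
| st_seq: "step \<Delta> P l P' \<Longrightarrow> step \<Delta> (Seq P Q) l (Seq P' Q)"
| st_parl: "step \<Delta> P l P' \<Longrightarrow> step \<Delta> (Par P Q) l (Par P' Q)"
| st_parr: "step \<Delta> P l P' \<Longrightarrow> step \<Delta> (Par Q P) l (Par Q P')"
| st_cong: "scong P P0 \<Longrightarrow> step \<Delta> P0 l Q0 \<Longrightarrow> scong Q0 Q \<Longrightarrow> step \<Delta> P l Q"

definition tau_steps :: "('c \<times> 'a lab \<times> 'c proc) set \<Rightarrow> 'c proc \<Rightarrow> 'c proc \<Rightarrow> bool" where
  "tau_steps \<Delta> = (\<lambda>P Q. step \<Delta> P Tau Q)\<^sup>*\<^sup>*"

definition wstep :: "('c \<times> 'a lab \<times> 'c proc) set \<Rightarrow> 'c proc \<Rightarrow> 'a lab \<Rightarrow> 'c proc \<Rightarrow> bool" where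
  "wstep \<Delta> P l Q \<longleftrightarrow>
     (if l = Tau then tau_steps \<Delta> P Q
      else (\<exists>P1 P2. tau_steps \<Delta> P P1 \<and> step \<Delta> P1 l P2 \<and> tau_steps \<Delta> P2 Q))"

definition weak_bisim :: "('c \<times> 'a lab \<times> 'c proc) set \<Rightarrow> ('c proc \<Rightarrow> 'c proc \<Rightarrow> bool) \<Rightarrow> bool" where
  "weak_bisim \<Delta> R \<longleftrightarrow> (\<forall>P Q. R P Q \<longrightarrow>
      (\<forall>l P'. step \<Delta> P l P' \<longrightarrow> (\<exists>Q'. wstep \<Delta> Q l Q' \<and> R P' Q')) \<and>
      (\<forall>l Q'. step \<Delta> Q l Q' \<longrightarrow> (\<exists>P'. wstep \<Delta> P l P' \<and> R P' Q')))"

definition wbisimilar :: "('c \<times> 'a lab \<times> 'c proc) set \<Rightarrow> 'c proc \<Rightarrow> 'c proc \<Rightarrow> bool" where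
  "wbisimilar \<Delta> P Q \<longleftrightarrow> (\<exists>R. weak_bisim \<Delta> R \<and> R P Q)"

fun seqs :: "'c list \<Rightarrow> 'c proc" where
  "seqs [] = Eps"
| "seqs (c # cs) = Seq (Cst c) (seqs cs)"

definition pcp_solvable :: "nat \<Rightarrow> (nat \<Rightarrow> 's list) \<Rightarrow> (nat \<Rightarrow> 's list) \<Rightarrow> bool" where
  "pcp_solvable n u v \<longleftrightarrow>
     (\<exists>is. is \<noteq> [] \<and> set is \<subseteq> {1..n} \<and> concat (map u is) = concat (map v is))"

datatype 's gact = LamU | LamV | LamD | LamI | LamS | LamZ | Num nat | Sym 's

text \<open>cW w 0 stands for W(w,0); cW w k for W(w,k) with k in {1..n}.\<close>
datatype 's gcon = cX | cY | cZ | cI | cS | cC | cC' | cD | cG | cG' | cGu | cGv | cGv'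
  | cU nat | cV nat | cW "'s list" nat

definition isW :: "nat \<Rightarrow> (nat \<Rightarrow> 's list) \<Rightarrow> (nat \<Rightarrow> 's list) \<Rightarrow> 's gcon \<Rightarrow> bool" where
  "isW n u v c \<longleftrightarrow> (\<exists>k w j. c = cW w j \<and> k \<in> {1..n} \<and> (suffix w (u k) \<or> suffix w (v k))
                         \<and> (j = k \<or> j = 0))"

inductive gRule :: "nat \<Rightarrow> (nat \<Rightarrow> 's list) \<Rightarrow> (nat \<Rightarrow> 's list) \<Rightarrow> 's gcon \<Rightarrow> 's gact lab \<Rightarrow> 's gcon proc \<Rightarrow> bool"
  for n :: nat and u v :: "nat \<Rightarrow> 's list" where
  "gRule n u v cX (Act LamU) (Par (Cst cD) (Cst cGv))"
| "gRule n u v cX Tau (Cst cD)"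
| "gRule n u v cY Tau (Cst cD)"
| "gRule n u v cD Tau (Par (Cst cD) (Cst cGu))"
| "gRule n u v cD (Act LamD) (Cst cC)"
| "k \<in> {1..n} \<Longrightarrow> gRule n u v cGu Tau (Seq (Cst cGu) (Cst (cU k)))"
| "k \<in> {1..n} \<Longrightarrow> gRule n u v cGu (Act LamU) (Seq (Cst cGv) (Cst (cU k)))"
| "gRule n u v cGu Tau (Cst cGv')"
| "k \<in> {1..n} \<Longrightarrow> gRule n u v cGv' Tau (Seq (Cst cGv') (Cst (cV k)))"
| "gRule n u v cGv' Tau (Cst cZ)"
| "k \<in> {1..n} \<Longrightarrow> gRule n u v cGv Tau (Seq (Cst cGv) (Cst (cV k)))"
| "gRule n u v cGv Tau Eps"
| "gRule n u v cGv (Act LamV) (Cst cZ)"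
| "gRule n u v cZ Tau Eps"
| "gRule n u v cZ (Act LamZ) Eps"
| "gRule n u v cC (Act LamI) (Cst cI)"
| "gRule n u v cC (Act LamS) (Cst cS)"
| "gRule n u v cC Tau (Par (Cst cC) (Cst cG))"
| "gRule n u v cC Tau (Par (Cst cC) (Cst cGv))"
| "k \<in> {1..n} \<Longrightarrow> gRule n u v cG Tau (Seq (Cst cG) (Cst (cU k)))"
| "k \<in> {1..n} \<Longrightarrow> gRule n u v cG Tau (Seq (Cst cG) (Cst (cV k)))"
| "gRule n u v cG Tau Eps"
| "gRule n u v cI (Act LamI) (Cst cC')"
| "k \<in> {1..n} \<Longrightarrow> gRule n u v cI (Act (Num k)) (Cst cI)"
| "gRule n u v cS (Act LamS) (Cst cC')"
| "gRule n u v cS (Act (Sym a)) (Cst cS)"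
| "gRule n u v cC' Tau (Par (Cst cC') (Cst cG'))"
| "gRule n u v cC' Tau Eps"
| "k \<in> {1..n} \<Longrightarrow> gRule n u v cG' Tau (Seq (Cst cG') (Cst (cU k)))"
| "k \<in> {1..n} \<Longrightarrow> gRule n u v cG' Tau (Seq (Cst cG') (Cst (cV k)))"
| "isW n u v W \<Longrightarrow> gRule n u v cG' Tau (Seq (Cst cG') (Cst W))"
| "gRule n u v cG' Tau (Cst cGv)"
| "gRule n u v cG' Tau (Cst cZ)"
| "k \<in> {1..n} \<Longrightarrow> gRule n u v (cU k) Tau (Cst (cW (u k) k))"
| "k \<in> {1..n} \<Longrightarrow> gRule n u v (cV k) Tau (Cst (cW (v k) k))"
| "k \<in> {1..n} \<Longrightarrow> isW n u v (cW (a # w) k) \<Longrightarrow> gRule n u v (cW (a # w) k) (Act (Sym a)) (Cst (cW w k))"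
| "isW n u v (cW (a # w) 0) \<Longrightarrow> gRule n u v (cW (a # w) 0) (Act (Sym a)) (Cst (cW w 0))"
| "k \<in> {1..n} \<Longrightarrow> isW n u v (cW w k) \<Longrightarrow> gRule n u v (cW w k) (Act (Num k)) (Cst (cW w 0))"
| "k \<in> {1..n} \<Longrightarrow> isW n u v (cW (a # w) k) \<Longrightarrow> gRule n u v (cW (a # w) k) Tau (Cst (cW w k))"
| "isW n u v (cW (a # w) 0) \<Longrightarrow> gRule n u v (cW (a # w) 0) Tau (Cst (cW w 0))"
| "k \<in> {1..n} \<Longrightarrow> isW n u v (cW w k) \<Longrightarrow> gRule n u v (cW w k) Tau (Cst (cW w 0))"
| "isW n u v (cW [] 0) \<Longrightarrow> gRule n u v (cW [] 0) Tau Eps"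

definition gDelta :: "nat \<Rightarrow> (nat \<Rightarrow> 's list) \<Rightarrow> (nat \<Rightarrow> 's list) \<Rightarrow> ('s gcon \<times> 's gact lab \<times> 's gcon proc) set" where
  "gDelta n u v = {(X, l, P). gRule n u v X l P}"

end

theory Submission
  imports Defs "HOL-Library.Multiset"
begin



definition th :: "'c list \<Rightarrow> 'c list multiset" where
  "th xs = (if xs = [] then {#} else {#xs#})"

definition pc :: "'a multiset option \<Rightarrow> 'a multiset option \<Rightarrow> 'a multiset option" where
  "pc a b = (case a of None \<Rightarrow> None | Some A \<Rightarrow> (case b of None \<Rightarrow> None | Some B \<Rightarrow> Some (A + B)))"

definition sc :: "'c list multiset option \<Rightarrow> 'c list multiset option \<Rightarrow> 'c list multiset option" where
  "sc a b = (case a of None \<Rightarrow> None | Some A \<Rightarrow> (case b of None \<Rightarrow> None | Some B \<Rightarrow>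
     if A = {#} then Some B else if B = {#} then Some A else
     if (\<exists>x. A = {#x#}) \<and> (\<exists>y. B = {#y#}) then Some {# (THE x. A = {#x#}) @ (THE y. B = {#y#}) #} else None))"

lemma sc_simps[simp]:
  "sc None b = None" "sc a None = None"
  "sc (Some {#}) b = b" "sc a (Some {#}) = a"
  "sc (Some {#x#}) (Some {#y#}) = Some {#x @ y#}"
  by (auto simp: sc_def split: option.splits)

lemma sc_Some_iff: "sc a b = Some C \<longleftrightarrow> (\<exists>A B. a = Some A \<and> b = Some B \<and>
   ((A = {#} \<and> C = B) \<or> (A \<noteq> {#} \<and> B = {#} \<and> C = A) \<or> (\<exists>x y. A = {#x#} \<and> B = {#y#} \<and> C = {#x@y#})))"
  by (auto simp: sc_def split: option.splits if_splits)

lemma sc_assoc: "sc (sc a b) c = sc a (sc b c)"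
proof (cases "sc (sc a b) c")
  case None
  show ?thesis
  proof (cases "sc a (sc b c)")
    case (Some C)
    then have "sc (sc a b) c = Some C" by (auto simp: sc_Some_iff)
    with None show ?thesis by simp
  qed (use None in simp)
next
  case (Some C)
  then show ?thesis
    by (auto simp: sc_Some_iff)
qed


lemma pc_simps[simp]: "pc (Some A) (Some B) = Some (A + B)" "pc None b = None" "pc a None = None"
  by (auto simp: pc_def split: option.splits)

lemma pc_Some_iff: "pc a b = Some C \<longleftrightarrow> (\<exists>A B. a = Some A \<and> b = Some B \<and> C = A + B)"
  by (auto simp: pc_def split: option.splits)

lemma pc_comm: "pc a b = pc b a"
  by (auto simp: pc_def add.commute split: option.splits)

lemma pc_unit[simp]: "pc (Some {#}) x = x" "pc x (Some {#}) = x"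
  by (auto simp: pc_def split: option.splits)

lemma pc_left_comm: "pc a (pc b c) = pc b (pc a c)"
  by (auto simp: pc_def add.left_commute split: option.splits)

lemma pc_assoc: "pc (pc a b) c = pc a (pc b c)"
  by (auto simp: pc_def add.assoc split: option.splits)

fun fl :: "'c proc \<Rightarrow> 'c list multiset option" where
  "fl Eps = Some {#}"
| "fl (Cst c) = Some {#[c]#}"
| "fl (Par a b) = pc (fl a) (fl b)"
| "fl (Seq a b) = sc (fl a) (fl b)"

lemma fl_scong: "scong P Q \<Longrightarrow> fl P = fl Q"
proof (induction rule: scong.induct)
  case (sc_par_comm P Q)
  then show ?case by (simp add: pc_comm[of "fl P"])
qed (simp_all add: sc_assoc pc_assoc)

lemma fl_seqs: "fl (seqs xs) = Some (th xs)"
  by (induction xs) (auto simp: th_def)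

lemma sc_th: "sc (Some (th xs)) (Some (th ys)) = Some (th (xs @ ys))"
  by (auto simp: th_def)

lemma fl_nonempty: "fl P = Some M \<Longrightarrow> [] \<notin># M"
proof (induction P arbitrary: M)
  case (Seq a b)
  then obtain A B where AB: "fl a = Some A" "fl b = Some B"
    by (cases "fl a"; cases "fl b") auto
  with Seq.prems have "(A = {#} \<and> M = B) \<or> (A \<noteq> {#} \<and> B = {#} \<and> M = A) \<or> (\<exists>x y. A = {#x#} \<and> B = {#y#} \<and> M = {#x@y#})"
    by (simp add: sc_Some_iff)
  then show ?case
  proof (elim disjE exE conjE)
    fix x y assume "A = {#x#}" "B = {#y#}" "M = {#x @ y#}"
    then show ?thesis using Seq.IH(1)[OF AB(1)] by simp
  qed (use Seq.IH AB in auto)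
next
  case (Par a b)
  then obtain A B where AB: "fl a = Some A" "fl b = Some B" "M = A + B"
    by (cases "fl a"; cases "fl b") auto
  then show ?case using Par.IH by auto
qed auto

lemma fl_empty_scong: "fl P = Some {#} \<Longrightarrow> scong P Eps"
proof (induction P)
  case (Seq a b)
  then have "fl a = Some {#}" "fl b = Some {#}" by (auto simp: sc_Some_iff)
  with Seq show ?case
    using sc_trans[OF sc_seq_cong sc_seq_unitl[of Eps]] by blast
next
  case (Par a b)
  then have "fl a = Some {#}" "fl b = Some {#}" by (auto simp: pc_Some_iff)
  with Par show ?case
    using sc_trans[OF sc_par_cong sc_par_unit[of Eps]] by blast
qed (auto intro: scong.intros)

lemma step_sound:
  assumes "step \<Delta> P l P'" "fl P = Some M"
  shows "\<exists>c rest R. c # rest \<in># M \<and> (c, l, R) \<in> \<Delta> \<and>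
            fl P' = pc (Some (M - {#c # rest#})) (fl (Seq R (seqs rest)))"
  using assms
proof (induction arbitrary: M rule: step.induct)
  case (st_rule X l P)
  then have M: "M = {#[X]#}" by simp
  have "fl P = pc (Some (M - {#[X]#})) (fl (Seq P (seqs [])))"
    by (simp add: M th_def)
  then show ?case using st_rule(1) M
    by (intro exI[where x=X] exI[where x="[]"] exI[where x=P] conjI) simp_all
next
  case (st_seq P l P' Q)
  then obtain A B where AB: "fl P = Some A" "fl Q = Some B"
    by (cases "fl P"; cases "fl Q") auto
  from st_seq.IH[OF AB(1)] obtain c rest R where
    h: "c # rest \<in># A" "(c, l, R) \<in> \<Delta>" "fl P' = pc (Some (A - {#c # rest#})) (fl (Seq R (seqs rest)))"
    by blast
  have Bne: "[] \<notin># B" using fl_nonempty AB(2) by blast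
  from st_seq.prems AB have "(A = {#} \<and> M = B) \<or> (A \<noteq> {#} \<and> B = {#} \<and> M = A) \<or> (\<exists>x y. A = {#x#} \<and> B = {#y#} \<and> M = {#x@y#})"
    by (simp add: sc_Some_iff)
  then show ?case
  proof (elim disjE exE conjE)
    assume "A = {#}" then show ?thesis using h by simp
  next
    assume "B = {#}" "M = A"
    then have "fl (Seq P' Q) = fl P'" using AB by simp
    then show ?thesis using h \<open>M = A\<close> by metis
  next
    fix x y assume xy: "A = {#x#}" "B = {#y#}" "M = {#x @ y#}"
    then have x: "x = c # rest" using h by simp
    have yne: "y \<noteq> []" using Bne xy by auto
    have "fl (Seq P' Q) = sc (sc (fl R) (Some (th rest))) (Some (th y))"
      using h xy x AB yne by (simp add: fl_seqs th_def)
    also have "\<dots> = sc (fl R) (Some (th (rest @ y)))" by (simp add: sc_assoc sc_th)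
    also have "\<dots> = pc (Some (M - {#c # (rest @ y)#})) (fl (Seq R (seqs (rest @ y))))"
      using xy x by (simp add: fl_seqs)
    finally have "fl (Seq P' Q) = pc (Some (M - {#c # (rest @ y)#})) (fl (Seq R (seqs (rest @ y))))" .
    moreover have "c # (rest @ y) \<in># M" using xy x by simp
    ultimately show ?thesis using h(2) by blast
  qed
next
  case (st_parl P l P' Q)
  then obtain A B where AB: "fl P = Some A" "fl Q = Some B" "M = A + B"
    by (cases "fl P"; cases "fl Q") auto
  from st_parl.IH[OF AB(1)] obtain c rest R where
    h: "c # rest \<in># A" "(c, l, R) \<in> \<Delta>" "fl P' = pc (Some (A - {#c # rest#})) (fl (Seq R (seqs rest)))"
    by blast
  have e: "A + B - {#c # rest#} = (A - {#c # rest#}) + B"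
    using h(1) diff_union_single_conv[of "c#rest" A B] by (simp add: add.commute)
  have "fl (Par P' Q) = pc (Some (M - {#c # rest#})) (fl (Seq R (seqs rest)))"
  proof (cases "fl (Seq R (seqs rest))")
    case None then show ?thesis using h by simp
  next
    case (Some N) then show ?thesis using h AB e
      by (simp add: add.assoc add.commute add.left_commute)
  qed
  moreover have "c # rest \<in># M" using h AB by simp
  ultimately show ?case using h(2) by blast
next
  case (st_parr P l P' Q)
  then obtain A B where AB: "fl Q = Some A" "fl P = Some B" "M = A + B"
    by (cases "fl P"; cases "fl Q") auto
  from st_parr.IH[OF AB(2)] obtain c rest R where
    h: "c # rest \<in># B" "(c, l, R) \<in> \<Delta>" "fl P' = pc (Some (B - {#c # rest#})) (fl (Seq R (seqs rest)))"
    by blast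
  have e: "A + B - {#c # rest#} = A + (B - {#c # rest#})"
    using h(1) diff_union_single_conv[of "c#rest" B A] by simp
  have "fl (Par Q P') = pc (Some (M - {#c # rest#})) (fl (Seq R (seqs rest)))"
  proof (cases "fl (Seq R (seqs rest))")
    case None then show ?thesis using h AB by simp
  next
    case (Some N) then show ?thesis using h AB e
      by (simp add: add.assoc)
  qed
  moreover have "c # rest \<in># M" using h AB by simp
  ultimately show ?case using h(2) by blast
next
  case (st_cong P P0 l Q0 Q)
  have "fl P0 = Some M" using st_cong fl_scong by metis
  from st_cong.IH[OF this] obtain c rest R where
    h: "c # rest \<in># M" "(c, l, R) \<in> \<Delta>" "fl Q0 = pc (Some (M - {#c # rest#})) (fl (Seq R (seqs rest)))"
    by blast
  have "fl Q = fl Q0" using st_cong(3) fl_scong by metis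
  then show ?case using h by metis
qed




lemma step_complete:
  assumes "fl P = Some M" "c # rest \<in># M" "(c, l, R) \<in> \<Delta>" "fl (Seq R (seqs rest)) = Some N"
  shows "\<exists>P'. step \<Delta> P l P' \<and> fl P' = Some (M - {#c # rest#} + N)"
  using assms
proof (induction P arbitrary: M c rest N)
  case Eps
  then show ?case by simp
next
  case (Cst X)
  then have M: "M = {#[X]#}" and c: "c = X" "rest = []" by auto
  have "fl R = Some N" using Cst.prems(4) c by (simp add: th_def)
  then show ?case using Cst.prems(3) M c by (auto intro: st_rule)
next
  case (Par a b)
  then obtain A B where AB: "fl a = Some A" "fl b = Some B" "M = A + B"
    by (cases "fl a"; cases "fl b") auto
  from Par.prems(2) AB(3) have "c # rest \<in># A \<or> c # rest \<in># B" by simp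
  then show ?case
  proof
    assume h: "c # rest \<in># A"
    from Par.IH(1)[OF AB(1) h Par.prems(3,4)] obtain a' where
      a': "step \<Delta> a l a'" "fl a' = Some (A - {#c # rest#} + N)" by blast
    have e: "A + B - {#c # rest#} = (A - {#c # rest#}) + B"
      using h diff_union_single_conv[of "c#rest" A B] by (simp add: add.commute)
    have "step \<Delta> (Par a b) l (Par a' b)" by (rule st_parl[OF a'(1)])
    moreover have "fl (Par a' b) = Some (M - {#c # rest#} + N)"
      using a' AB e by (simp add: add.assoc add.commute add.left_commute)
    ultimately show ?thesis by blast
  next
    assume h: "c # rest \<in># B"
    from Par.IH(2)[OF AB(2) h Par.prems(3,4)] obtain b' where
      b': "step \<Delta> b l b'" "fl b' = Some (B - {#c # rest#} + N)" by blast
    have e: "A + B - {#c # rest#} = A + (B - {#c # rest#})"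
      using h diff_union_single_conv[of "c#rest" B A] by simp
    have "step \<Delta> (Par a b) l (Par a b')" by (rule st_parr[OF b'(1)])
    moreover have "fl (Par a b') = Some (M - {#c # rest#} + N)"
      using b' AB e by (simp add: add.assoc)
    ultimately show ?thesis by blast
  qed
next
  case (Seq a b)
  then obtain A B where AB: "fl a = Some A" "fl b = Some B"
    by (cases "fl a"; cases "fl b") auto
  from Seq.prems(1) AB have "(A = {#} \<and> M = B) \<or> (A \<noteq> {#} \<and> B = {#} \<and> M = A) \<or> (\<exists>x y. A = {#x#} \<and> B = {#y#} \<and> M = {#x@y#})"
    by (simp add: sc_Some_iff)
  then show ?case
  proof (elim disjE exE conjE)
    assume A: "A = {#}" and M: "M = B"
    from Seq.IH(2)[OF AB(2) Seq.prems(2)[unfolded M] Seq.prems(3,4)] obtain b' where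
      b': "step \<Delta> b l b'" "fl b' = Some (B - {#c # rest#} + N)" by blast
    have "scong a Eps" using fl_empty_scong AB(1) A by simp
    then have "scong (Seq a b) b"
      using sc_trans[OF sc_seq_cong[OF _ sc_refl] sc_seq_unitl] by blast
    then have "step \<Delta> (Seq a b) l b'" using b'(1) st_cong sc_refl by metis
    then show ?thesis using b' M by blast
  next
    assume B: "B = {#}" and M: "M = A"
    from Seq.IH(1)[OF AB(1) Seq.prems(2)[unfolded M] Seq.prems(3,4)] obtain a' where
      a': "step \<Delta> a l a'" "fl a' = Some (A - {#c # rest#} + N)" by blast
    have "scong b Eps" using fl_empty_scong AB(2) B by simp
    then have "scong (Seq a b) a"
      using sc_trans[OF sc_seq_cong[OF sc_refl] sc_seq_unitr] by blast
    then have "step \<Delta> (Seq a b) l a'" using a'(1) st_cong sc_refl by metis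
    then show ?thesis using a' M by blast
  next
    fix x y assume xy: "A = {#x#}" "B = {#y#}" "M = {#x @ y#}"
    have xne: "x \<noteq> []" using fl_nonempty[OF AB(1)] xy by auto
    have yne: "y \<noteq> []" using fl_nonempty[OF AB(2)] xy by auto
    from Seq.prems(2) xy have cr: "c # rest = x @ y" by simp
    with xne obtain x' where x': "x = c # x'" "rest = x' @ y"
      by (cases x) auto
    from Seq.prems(4) have N: "sc (fl R) (Some (th (x' @ y))) = Some N" by (simp add: fl_seqs x')
    then obtain C where C: "fl R = Some C" by (cases "fl R") auto
    have thne: "th (x' @ y) \<noteq> {#}" using yne by (simp add: th_def)
    have "\<exists>N'. sc (fl R) (Some (th x')) = Some N'"
    proof (cases "C = {#}")
      case True then show ?thesis using C by simp
    next
      case False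
      with N C thne obtain z where "C = {#z#}" by (auto simp: sc_Some_iff)
      then show ?thesis using C by (auto simp: th_def)
    qed
    then obtain N' where N': "fl (Seq R (seqs x')) = Some N'" by (auto simp: fl_seqs)
    have cx: "c # x' \<in># A" using xy x' by simp
    from Seq.IH(1)[OF AB(1) cx Seq.prems(3) N'] obtain a' where
      a': "step \<Delta> a l a'" "fl a' = Some (A - {#c # x'#} + N')" by blast
    have "step \<Delta> (Seq a b) l (Seq a' b)" by (rule st_seq[OF a'(1)])
    moreover have "fl (Seq a' b) = Some (M - {#c # rest#} + N)"
    proof -
      have "fl (Seq a' b) = sc (sc (fl R) (Some (th x'))) (Some (th y))"
        using a'(2) xy x' N' AB yne by (simp add: fl_seqs th_def)
      also have "\<dots> = Some N" using N by (simp add: sc_assoc sc_th)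
      finally show ?thesis using xy cr by simp
    qed
    ultimately show ?thesis by blast
  qed
qed

inductive wtr :: "('c \<times> 'a lab \<times> 'c proc) set \<Rightarrow> 'c proc \<Rightarrow> 'a list \<Rightarrow> 'c proc \<Rightarrow> bool"
  for \<Delta> where
  wtr_nil: "wtr \<Delta> P [] P"
| wtr_tau: "step \<Delta> P Tau P1 \<Longrightarrow> wtr \<Delta> P1 t P2 \<Longrightarrow> wtr \<Delta> P t P2"
| wtr_act: "step \<Delta> P (Act a) P1 \<Longrightarrow> wtr \<Delta> P1 t P2 \<Longrightarrow> wtr \<Delta> P (a # t) P2"

lemma wtr_taus: "tau_steps \<Delta> P Q \<Longrightarrow> wtr \<Delta> Q t R \<Longrightarrow> wtr \<Delta> P t R"
  unfolding tau_steps_def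
  by (induction rule: converse_rtranclp_induct) (auto intro: wtr_tau)

lemma wtr_append: "wtr \<Delta> P t1 Q \<Longrightarrow> wtr \<Delta> Q t2 R \<Longrightarrow> wtr \<Delta> P (t1 @ t2) R"
  by (induction rule: wtr.induct) (auto intro: wtr.intros)

lemma weak_bisim_conv: "weak_bisim \<Delta> R \<Longrightarrow> weak_bisim \<Delta> (\<lambda>P Q. R Q P)"
  unfolding weak_bisim_def by blast

lemma bisim_taus:
  assumes wb: "weak_bisim \<Delta> R" and "tau_steps \<Delta> P P'" and "R P Q"
  shows "\<exists>Q'. tau_steps \<Delta> Q Q' \<and> R P' Q'"
  using assms(2,3) unfolding tau_steps_def
proof (induction arbitrary: rule: rtranclp_induct)
  case base then show ?case by blast
next
  case (step y z)
  then obtain Q1 where Q1: "(\<lambda>P Q. step \<Delta> P Tau Q)\<^sup>*\<^sup>* Q Q1" "R y Q1" by blast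
  with step(2) wb obtain Q2 where "wstep \<Delta> Q1 Tau Q2" "R z Q2"
    unfolding weak_bisim_def by blast
  then show ?case using Q1 unfolding wstep_def tau_steps_def by (meson rtranclp_trans)
qed

lemma bisim_wtr:
  assumes wb: "weak_bisim \<Delta> R" and "wtr \<Delta> P t P'" and "R P Q"
  shows "\<exists>Q'. wtr \<Delta> Q t Q' \<and> R P' Q'"
  using assms(2,3)
proof (induction arbitrary: Q rule: wtr.induct)
  case (wtr_nil P)
  then show ?case by (auto intro: wtr.intros)
next
  case (wtr_tau P P1 t P2)
  with wb obtain Q1 where "wstep \<Delta> Q Tau Q1" "R P1 Q1"
    unfolding weak_bisim_def by blast
  then show ?case using wtr_tau.IH wtr_taus unfolding wstep_def by fastforce
next
  case (wtr_act P a P1 t P2)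
  with wb obtain Q1 where "wstep \<Delta> Q (Act a) Q1" "R P1 Q1"
    unfolding weak_bisim_def by blast
  then obtain Qa Qb where "tau_steps \<Delta> Q Qa" "step \<Delta> Qa (Act a) Qb" "tau_steps \<Delta> Qb Q1"
    unfolding wstep_def by auto
  moreover obtain Q' where "wtr \<Delta> Q1 t Q'" "R P2 Q'" using wtr_act.IH \<open>R P1 Q1\<close> by blast
  ultimately show ?case by (meson wtr.wtr_act wtr_taus)
qed




fun isJ :: "'s gcon \<Rightarrow> bool" where
  "isJ cG = True" | "isJ cGv = True" | "isJ (cU k) = True" | "isJ (cV k) = True" | "isJ (cW w k) = True"
| "isJ _ = False"

fun isWc :: "'s gcon \<Rightarrow> bool" where
  "isWc cZ = True" | "isWc (cU k) = True" | "isWc (cV k) = True" | "isWc (cW w k) = True"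
| "isWc _ = False"

fun ncap1 :: "'s gcon \<Rightarrow> nat list" where
  "ncap1 (cU k) = [k]" | "ncap1 (cV k) = [k]" | "ncap1 (cW w k) = (if k = 0 then [] else [k])"
| "ncap1 _ = []"

fun lcap1 :: "(nat \<Rightarrow> 's list) \<Rightarrow> (nat \<Rightarrow> 's list) \<Rightarrow> 's gcon \<Rightarrow> 's list" where
  "lcap1 u v (cU k) = u k" | "lcap1 u v (cV k) = v k" | "lcap1 u v (cW w k) = w"
| "lcap1 u v _ = []"

definition ncap :: "'s gcon list \<Rightarrow> nat list" where "ncap t = concat (map ncap1 t)"
definition lcap :: "(nat \<Rightarrow> 's list) \<Rightarrow> (nat \<Rightarrow> 's list) \<Rightarrow> 's gcon list \<Rightarrow> 's list" where
  "lcap u v t = concat (map (lcap1 u v) t)"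

fun anum :: "'s gact \<Rightarrow> nat list" where "anum (Num k) = [k]" | "anum _ = []"
fun asymc :: "'s gact \<Rightarrow> 's list" where "asymc (Sym a) = [a]" | "asymc _ = []"
fun lnum :: "'s gact lab \<Rightarrow> nat list" where "lnum (Act a) = anum a" | "lnum Tau = []"
fun lsym :: "'s gact lab \<Rightarrow> 's list" where "lsym (Act a) = asymc a" | "lsym Tau = []"

lemma inD: "(c, l, R) \<in> gDelta n u v \<longleftrightarrow> gRule n u v c l R"
  by (simp add: gDelta_def)

lemma rule_C: "gRule n u v cC l R \<Longrightarrow>
   (l = Act LamI \<and> R = Cst cI) \<or> (l = Act LamS \<and> R = Cst cS) \<or>
   (l = Tau \<and> R = Par (Cst cC) (Cst cG)) \<or> (l = Tau \<and> R = Par (Cst cC) (Cst cGv))"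
  by (cases rule: gRule.cases) auto

lemma rule_S: "gRule n u v cS l R \<Longrightarrow> (\<exists>a. l = Act (Sym a) \<and> R = Cst cS) \<or> (l = Act LamS \<and> R = Cst cC')"
  by (cases rule: gRule.cases) auto

lemma rule_I: "gRule n u v cI l R \<Longrightarrow> (\<exists>k. l = Act (Num k) \<and> R = Cst cI) \<or> (l = Act LamI \<and> R = Cst cC')"
  by (cases rule: gRule.cases) auto

lemma rule_Z: "gRule n u v cZ l R \<Longrightarrow> (l = Tau \<or> l = Act LamZ) \<and> R = Eps"
  by (cases rule: gRule.cases) auto

lemma rule_LamZ: "gRule n u v c (Act LamZ) R \<Longrightarrow> c = cZ"
  by (cases rule: gRule.cases) auto

lemma rule_J: "gRule n u v c l R \<Longrightarrow> isJ c \<Longrightarrow> l \<noteq> Act LamV \<Longrightarrow>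
   R = Eps \<or> (\<exists>c'. R = Cst c' \<and> isJ c') \<or> (\<exists>c1 c2. R = Seq (Cst c1) (Cst c2) \<and> isJ c1 \<and> isJ c2)"
  by (cases rule: gRule.cases) auto

lemma rule_W: "gRule n u v c l R \<Longrightarrow> isWc c \<Longrightarrow>
   (R = Eps \<and> subseq (lnum l) (ncap1 c) \<and> subseq (lsym l) (lcap1 u v c)) \<or>
   (\<exists>c'. R = Cst c' \<and> isWc c' \<and> subseq (lnum l @ ncap1 c') (ncap1 c) \<and> subseq (lsym l @ lcap1 u v c') (lcap1 u v c))"
  by (cases rule: gRule.cases) auto


lemma rhs_J: "R = Eps \<or> (\<exists>c'. R = Cst c' \<and> isJ c') \<or> (\<exists>c1 c2. R = Seq (Cst c1) (Cst c2) \<and> isJ c1 \<and> isJ c2)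
  \<Longrightarrow> \<forall>x\<in>set rest. isJ x \<Longrightarrow> \<exists>ys. fl (Seq R (seqs rest)) = Some (th ys) \<and> (\<forall>x\<in>set ys. isJ x)"
  apply (elim disjE exE conjE)
  apply (rule exI[where x=rest]; simp add: fl_seqs)
   apply (rule_tac x="c' # rest" in exI; simp add: fl_seqs th_def)
  apply (rule_tac x="c1 # c2 # rest" in exI; simp add: fl_seqs th_def)
  done

definition InvB :: "'s gcon \<Rightarrow> 's gcon list \<Rightarrow> 's gcon list multiset \<Rightarrow> 's gcon list multiset \<Rightarrow> bool" where
  "InvB K xs Zp M \<longleftrightarrow> (Zp = {#} \<or> Zp = {#cZ # xs#}) \<and>
     (\<exists>J. M = add_mset [K] (Zp + J) \<and> (\<forall>th\<in>#J. \<forall>x\<in>set th. isJ x))"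

lemma th_J: "\<forall>x\<in>set ys. isJ x \<Longrightarrow> \<forall>th\<in>#th ys. \<forall>x\<in>set th. isJ x"
  by (simp add: th_def)

lemma invB_tau:
  assumes inv: "InvB K xs Zp M" and K: "K \<in> {cC, cS, cI}" and xs: "\<forall>x\<in>set xs. isJ x"
    and r: "gRule n u v c Tau R" and t: "c # rest \<in># M"
  shows "\<exists>Zp' M'. pc (Some (M - {#c # rest#})) (fl (Seq R (seqs rest))) = Some M' \<and> InvB K xs Zp' M' \<and> (Zp = {#} \<longrightarrow> Zp' = {#})"
proof -
  obtain J where M: "M = add_mset [K] (Zp + J)" and J: "\<forall>th\<in>#J. \<forall>x\<in>set th. isJ x"
    and Zp: "Zp = {#} \<or> Zp = {#cZ # xs#}"
    using inv unfolding InvB_def by blast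
  from t M have "c # rest = [K] \<or> c # rest \<in># Zp \<or> c # rest \<in># J" by auto
  then show ?thesis
  proof (elim disjE)
    assume h: "c # rest = [K]"
    then have c: "c = K" "rest = []" by auto
    have rK: "gRule n u v K Tau R" using r c by simp
    have KC: "K = cC"
    proof -
      have "K = cC \<or> K = cS \<or> K = cI" using K by simp
      moreover have "K \<noteq> cS" using rule_S[of n u v Tau R] rK by auto
      moreover have "K \<noteq> cI" using rule_I[of n u v Tau R] rK by auto
      ultimately show ?thesis by blast
    qed
    from rule_C[OF rK[unfolded KC]] obtain g where R: "R = Par (Cst cC) (Cst g)" "isJ g" "K = cC"
      using KC by auto
    have "pc (Some (M - {#c # rest#})) (fl (Seq R (seqs rest))) = Some (add_mset [K] (Zp + (add_mset [g] J)))"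
      using M R c h by (simp add: th_def)
    moreover have "InvB K xs Zp (add_mset [K] (Zp + (add_mset [g] J)))"
      unfolding InvB_def using Zp J R by auto
    ultimately show ?thesis by blast
  next
    assume h: "c # rest \<in># Zp"
    then have Zp1: "Zp = {#cZ # xs#}" and c: "c = cZ" "rest = xs" using Zp by auto
    from r c have R: "R = Eps" using rule_Z by blast
    have "pc (Some (M - {#c # rest#})) (fl (Seq R (seqs rest))) = Some (add_mset [K] ({#} + (J + th xs)))"
      using M R c Zp1 by (simp add: fl_seqs)
    moreover have "InvB K xs {#} (add_mset [K] ({#} + (J + th xs)))"
      unfolding InvB_def using J th_J[OF xs] by auto
    ultimately show ?thesis by blast
  next
    assume h: "c # rest \<in># J"
    then have cJ: "isJ c" and rJ: "\<forall>x\<in>set rest. isJ x" using J by auto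
    from rhs_J[OF rule_J[OF r cJ] rJ] obtain ys where
      ys: "fl (Seq R (seqs rest)) = Some (th ys)" "\<forall>x\<in>set ys. isJ x" by auto
    obtain J' where J': "J = add_mset (c # rest) J'" using multi_member_split[OF h] by blast
    have e: "M - {#c # rest#} = add_mset [K] (Zp + J')"
      using M J' by simp
    have "pc (Some (M - {#c # rest#})) (fl (Seq R (seqs rest))) = Some (add_mset [K] (Zp + (J' + th ys)))"
      using e ys by (simp add: add.assoc)
    moreover have "InvB K xs Zp (add_mset [K] (Zp + (J' + th ys)))"
      unfolding InvB_def using Zp J th_J[OF ys(2)] J'
      by (intro conjI exI[where x="J' + th ys"]) auto
    ultimately show ?thesis by blast
  qed
qed


lemma rule_LamS: "gRule n u v c (Act LamS) R \<Longrightarrow> c = cC \<or> c = cS"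
  by (cases rule: gRule.cases) auto

lemma rule_LamI: "gRule n u v c (Act LamI) R \<Longrightarrow> c = cC \<or> c = cI"
  by (cases rule: gRule.cases) auto

lemma invB_lam:
  assumes inv: "InvB cC xs Zp M" and lam: "lam = LamS \<or> lam = LamI"
    and r: "gRule n u v c (Act lam) R" and t: "c # rest \<in># M"
  shows "\<exists>M'. pc (Some (M - {#c # rest#})) (fl (Seq R (seqs rest))) = Some M' \<and>
           InvB (if lam = LamS then cS else cI) xs Zp M'"
proof -
  obtain J where M: "M = add_mset [cC] (Zp + J)" and J: "\<forall>th\<in>#J. \<forall>x\<in>set th. isJ x"
    and Zp: "Zp = {#} \<or> Zp = {#cZ # xs#}"
    using inv unfolding InvB_def by blast
  have cc: "c = cC \<or> c = cS \<or> c = cI" using lam r rule_LamS rule_LamI by blast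
  from t M have "c # rest = [cC] \<or> c # rest \<in># Zp \<or> c # rest \<in># J" by auto
  moreover have "c # rest \<notin># Zp" using Zp cc by auto
  moreover have "c # rest \<notin># J" using J cc by fastforce
  ultimately have h: "c = cC" "rest = []" by auto
  have R: "R = Cst (if lam = LamS then cS else cI)"
    using rule_C[OF r[unfolded h]] lam by auto
  have "pc (Some (M - {#c # rest#})) (fl (Seq R (seqs rest))) = Some (add_mset [if lam = LamS then cS else cI] (Zp + J))"
    using M R h by (simp add: th_def)
  moreover have "InvB (if lam = LamS then cS else cI) xs Zp (add_mset [if lam = LamS then cS else cI] (Zp + J))"
    unfolding InvB_def using Zp J by blast
  ultimately show ?thesis by blast
qed

lemma invB_taus:
  assumes "tau_steps (gDelta n u v) P P'" "fl P = Some M" "InvB K xs Zp M"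
    "K \<in> {cC, cS, cI}" "\<forall>x\<in>set xs. isJ x"
  shows "\<exists>M' Zp'. fl P' = Some M' \<and> InvB K xs Zp' M' \<and> (Zp = {#} \<longrightarrow> Zp' = {#})"
  using assms(1) unfolding tau_steps_def
proof (induction rule: rtranclp_induct)
  case base
  then show ?case using assms by blast
next
  case (step y z)
  then obtain M1 Zp1 where h: "fl y = Some M1" "InvB K xs Zp1 M1" "Zp = {#} \<longrightarrow> Zp1 = {#}" by blast
  from step_sound[OF step(2) h(1)] obtain c rest R where
    s: "c # rest \<in># M1" "(c, Tau, R) \<in> gDelta n u v"
       "fl z = pc (Some (M1 - {#c # rest#})) (fl (Seq R (seqs rest)))" by blast
  from invB_tau[OF h(2) assms(4,5) s(2)[unfolded inD] s(1)] s(3) h(3)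
  show ?case by metis
qed

lemma invB_lamstep:
  assumes "step (gDelta n u v) P (Act lam) P'" "fl P = Some M" "InvB cC xs Zp M" "lam = LamS \<or> lam = LamI"
  shows "\<exists>M'. fl P' = Some M' \<and> InvB (if lam = LamS then cS else cI) xs Zp M'"
proof -
  from step_sound[OF assms(1,2)] obtain c rest R where
    s: "c # rest \<in># M" "(c, Act lam, R) \<in> gDelta n u v"
       "fl P' = pc (Some (M - {#c # rest#})) (fl (Seq R (seqs rest)))" by blast
  from invB_lam[OF assms(3,4) s(2)[unfolded inD] s(1)] s(3) show ?thesis by metis
qed

lemma invB_noZ:
  assumes "fl P = Some M" "InvB K xs {#} M" "K \<in> {cC, cS, cI}"
  shows "\<not> step (gDelta n u v) P (Act LamZ) P'"
proof
  assume "step (gDelta n u v) P (Act LamZ) P'"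
  from step_sound[OF this assms(1)] obtain c rest R where
    s: "c # rest \<in># M" "gRule n u v c (Act LamZ) R" by (auto simp: inD)
  have c: "c = cZ" using rule_LamZ s(2) by blast
  obtain J where M: "M = add_mset [K] J" and J: "\<forall>th\<in>#J. \<forall>x\<in>set th. isJ x"
    using assms(2) unfolding InvB_def by auto
  show False using s(1) M J c assms(3) by fastforce
qed

lemma clean_step:
  assumes r: "gRule n u v c l R" and t: "c # rest \<in># add_mset [K] (th tt)"
    and K: "K = cS \<or> K = cI" and l: "l \<noteq> Act LamS" "l \<noteq> Act LamI" and W: "\<forall>x\<in>set tt. isWc x"
  shows "\<exists>t'. pc (Some (add_mset [K] (th tt) - {#c # rest#})) (fl (Seq R (seqs rest))) = Some (add_mset [K] (th t'))
     \<and> (\<forall>x\<in>set t'. isWc x) \<and> (K = cS \<longrightarrow> subseq (lnum l @ ncap t') (ncap tt))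
     \<and> (K = cI \<longrightarrow> subseq (lsym l @ lcap u v t') (lcap u v tt))"
proof -
  from t have "c # rest = [K] \<or> c # rest \<in># th tt" by auto
  then show ?thesis
  proof
    assume h: "c # rest = [K]"
    then have c: "c = K" "rest = []" by auto
    have "(K = cS \<and> R = Cst cS \<and> lnum l = []) \<or> (K = cI \<and> R = Cst cI \<and> lsym l = [])"
      using K
    proof
      assume KS: "K = cS"
      then show ?thesis using rule_S[OF r[unfolded c KS]] l by auto
    next
      assume KI: "K = cI"
      then show ?thesis using rule_I[OF r[unfolded c KI]] l by auto
    qed
    then have "pc (Some (add_mset [K] (th tt) - {#c # rest#})) (fl (Seq R (seqs rest))) = Some (add_mset [K] (th tt))
      \<and> (K = cS \<longrightarrow> subseq (lnum l @ ncap tt) (ncap tt))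
      \<and> (K = cI \<longrightarrow> subseq (lsym l @ lcap u v tt) (lcap u v tt))"
      using c by (auto simp: th_def)
    then show ?thesis using W by blast
  next
    assume h: "c # rest \<in># th tt"
    then have tt: "tt = c # rest" by (auto simp: th_def split: if_splits)
    have cW: "isWc c" and rW: "\<forall>x\<in>set rest. isWc x" using W tt by auto
    have e: "add_mset [K] (th tt) - {#c # rest#} = {#[K]#}" using tt by (simp add: th_def)
    from rule_W[OF r cW] show ?thesis
    proof (elim disjE exE conjE)
      assume R: "R = Eps" and s1: "subseq (lnum l) (ncap1 c)" and s2: "subseq (lsym l) (lcap1 u v c)"
      have "pc (Some (add_mset [K] (th tt) - {#c # rest#})) (fl (Seq R (seqs rest))) = Some (add_mset [K] (th rest))"
        using e R by (simp add: fl_seqs)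
      moreover have "subseq (lnum l @ ncap rest) (ncap tt)"
        using list_emb_append_mono[OF s1 subseq_order.order_refl] tt by (simp add: ncap_def)
      moreover have "subseq (lsym l @ lcap u v rest) (lcap u v tt)"
        using list_emb_append_mono[OF s2 subseq_order.order_refl] tt by (simp add: lcap_def)
      ultimately show ?thesis using rW by blast
    next
      fix c' assume R: "R = Cst c'" and cw: "isWc c'" and s1: "subseq (lnum l @ ncap1 c') (ncap1 c)"
        and s2: "subseq (lsym l @ lcap1 u v c') (lcap1 u v c)"
      have "pc (Some (add_mset [K] (th tt) - {#c # rest#})) (fl (Seq R (seqs rest))) = Some (add_mset [K] (th (c' # rest)))"
        using e R by (simp add: fl_seqs th_def)
      moreover have "subseq (lnum l @ ncap (c' # rest)) (ncap tt)"
        using list_emb_append_mono[OF s1 subseq_order.order_refl] tt by (simp add: ncap_def)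
      moreover have "subseq (lsym l @ lcap u v (c' # rest)) (lcap u v tt)"
        using list_emb_append_mono[OF s2 subseq_order.order_refl] tt by (simp add: lcap_def)
      ultimately show ?thesis using rW cw by (intro exI[where x="c' # rest"]) auto
    qed
  qed
qed




lemma clean_trace:
  assumes "wtr (gDelta n u v) P tr P'" "fl P = Some (add_mset [K] (th tt))" "\<forall>x\<in>set tt. isWc x"
    "K = cS \<or> K = cI" "LamS \<notin> set tr" "LamI \<notin> set tr"
  shows "(K = cS \<longrightarrow> subseq (concat (map anum tr)) (ncap tt)) \<and>
         (K = cI \<longrightarrow> subseq (concat (map asymc tr)) (lcap u v tt))"
  using assms
proof (induction arbitrary: tt rule: wtr.induct)
  case (wtr_nil P)
  then show ?case by simp
next
  case (wtr_tau P P1 t P2)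
  from step_sound[OF wtr_tau.hyps(1) wtr_tau.prems(1)] obtain c rest R where
    s: "c # rest \<in># add_mset [K] (th tt)" "(c, Tau, R) \<in> gDelta n u v"
       "fl P1 = pc (Some (add_mset [K] (th tt) - {#c # rest#})) (fl (Seq R (seqs rest)))"
    by blast
  have r: "gRule n u v c Tau R" using s(2) by (simp add: inD)
  have l: "Tau \<noteq> Act LamS" "Tau \<noteq> Act LamI" by simp_all
  obtain t' where tall: "pc (Some (add_mset [K] (th tt) - {#c # rest#})) (fl (Seq R (seqs rest))) = Some (add_mset [K] (th t')) \<and>
     (\<forall>x\<in>set t'. isWc x) \<and> (K = cS \<longrightarrow> subseq (ncap t') (ncap tt)) \<and>
     (K = cI \<longrightarrow> subseq (lcap u v t') (lcap u v tt))"
    using clean_step[OF r s(1) wtr_tau.prems(3) l wtr_tau.prems(2)] by auto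
  have t0: "pc (Some (add_mset [K] (th tt) - {#c # rest#})) (fl (Seq R (seqs rest))) = Some (add_mset [K] (th t'))"
    and t': "\<forall>x\<in>set t'. isWc x"
        "K = cS \<longrightarrow> subseq (ncap t') (ncap tt)" "K = cI \<longrightarrow> subseq (lcap u v t') (lcap u v tt)"
    using tall by simp_all
  have f1: "fl P1 = Some (add_mset [K] (th t'))" using s(3) t0 by simp
  have A: "K = cS \<longrightarrow> subseq (concat (map anum t)) (ncap t')"
   and B: "K = cI \<longrightarrow> subseq (concat (map asymc t)) (lcap u v t')"
    using wtr_tau.IH[OF f1 t'(1) wtr_tau.prems(3,4,5)] by blast+
  show ?case
  proof (intro conjI impI)
    assume KS: "K = cS"
    have "subseq (ncap t') (ncap tt)" using t'(2) KS by simp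
    then show "subseq (concat (map anum t)) (ncap tt)"
      using subseq_order.trans[OF A[rule_format, OF KS]] by blast
  next
    assume KI: "K = cI"
    have "subseq (lcap u v t') (lcap u v tt)" using t'(3) KI by simp
    then show "subseq (concat (map asymc t)) (lcap u v tt)"
      using subseq_order.trans[OF B[rule_format, OF KI]] by blast
  qed
next
  case (wtr_act P a P1 t P2)
  from step_sound[OF wtr_act.hyps(1) wtr_act.prems(1)] obtain c rest R where
    s: "c # rest \<in># add_mset [K] (th tt)" "(c, Act a, R) \<in> gDelta n u v"
       "fl P1 = pc (Some (add_mset [K] (th tt) - {#c # rest#})) (fl (Seq R (seqs rest)))"
    by blast
  have r: "gRule n u v c (Act a) R" using s(2) by (simp add: inD)
  have l: "Act a \<noteq> Act LamS" "Act a \<noteq> Act LamI" using wtr_act.prems(4,5) by auto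
  obtain t' where tall: "pc (Some (add_mset [K] (th tt) - {#c # rest#})) (fl (Seq R (seqs rest))) = Some (add_mset [K] (th t')) \<and>
     (\<forall>x\<in>set t'. isWc x) \<and> (K = cS \<longrightarrow> subseq (lnum (Act a) @ ncap t') (ncap tt)) \<and>
     (K = cI \<longrightarrow> subseq (lsym (Act a) @ lcap u v t') (lcap u v tt))"
    using clean_step[OF r s(1) wtr_act.prems(3) l wtr_act.prems(2)] ..
  have t0: "pc (Some (add_mset [K] (th tt) - {#c # rest#})) (fl (Seq R (seqs rest))) = Some (add_mset [K] (th t'))"
    and t': "\<forall>x\<in>set t'. isWc x"
        "K = cS \<longrightarrow> subseq (lnum (Act a) @ ncap t') (ncap tt)" "K = cI \<longrightarrow> subseq (lsym (Act a) @ lcap u v t') (lcap u v tt)"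
    using tall by simp_all
  have f1: "fl P1 = Some (add_mset [K] (th t'))" using s(3) t0 by simp
  have p: "LamS \<notin> set t" "LamI \<notin> set t" using wtr_act.prems(4,5) by auto
  have A: "K = cS \<longrightarrow> subseq (concat (map anum t)) (ncap t')"
   and B: "K = cI \<longrightarrow> subseq (concat (map asymc t)) (lcap u v t')"
    using wtr_act.IH[OF f1 t'(1) wtr_act.prems(3) p] by blast+
  have "K = cS \<longrightarrow> subseq (anum a @ concat (map anum t)) (ncap tt)"
  proof
    assume "K = cS"
    then have "subseq (anum a @ concat (map anum t)) (anum a @ ncap t')"
      using A list_emb_append_mono[OF subseq_order.order_refl] by blast
    moreover have "subseq (anum a @ ncap t') (ncap tt)" using t'(2) \<open>K = cS\<close> by simp
    ultimately show "subseq (anum a @ concat (map anum t)) (ncap tt)"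
      using subseq_order.trans by blast
  qed
  moreover have "K = cI \<longrightarrow> subseq (asymc a @ concat (map asymc t)) (lcap u v tt)"
  proof
    assume "K = cI"
    then have "subseq (asymc a @ concat (map asymc t)) (asymc a @ lcap u v t')"
      using B list_emb_append_mono[OF subseq_order.order_refl] by blast
    moreover have "subseq (asymc a @ lcap u v t') (lcap u v tt)" using t'(3) \<open>K = cI\<close> by simp
    ultimately show "subseq (asymc a @ concat (map asymc t)) (lcap u v tt)"
      using subseq_order.trans by blast
  qed
  ultimately show ?case by simp
qed

lemma fl_cst_seqs: "fl (Seq (Cst c) (seqs ys)) = Some {#c # ys#}"
  by (simp add: fl_seqs th_def)

lemma fl_eps_seqs: "fl (Seq Eps (seqs ys)) = Some (th ys)"
  by (simp add: fl_seqs)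

lemma step_at:
  assumes "fl P = Some (M0 + {#c # rest#})" "gRule n u v c l R" "fl (Seq R (seqs rest)) = Some N"
  shows "\<exists>P'. step (gDelta n u v) P l P' \<and> fl P' = Some (M0 + N)"
  using step_complete[OF assms(1) _ assms(2)[folded inD] assms(3)] by simp

lemma emit_erase:
  assumes "fl P = Some (MM + {#cW w 0 # ys#})" "suffix w (u k) \<or> suffix w (v k)" "k \<in> {1..n}"
  shows "\<exists>P'. tau_steps (gDelta n u v) P P' \<and> fl P' = Some (MM + th ys)"
  using assms
proof (induction w arbitrary: P)
  case Nil
  have "isW n u v (cW [] 0)" unfolding isW_def using Nil.prems(3) by auto
  then have "gRule n u v (cW [] 0) Tau Eps" by (rule gRule.intros(42))
  from step_at[OF Nil.prems(1) this fl_eps_seqs] obtain P' where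
    "step (gDelta n u v) P Tau P'" "fl P' = Some (MM + th ys)" by blast
  then show ?case unfolding tau_steps_def by auto
next
  case (Cons a w)
  have "isW n u v (cW (a # w) 0)" unfolding isW_def using Cons.prems(2,3) by auto
  then have "gRule n u v (cW (a # w) 0) Tau (Cst (cW w 0))" by (rule gRule.intros(40))
  from step_at[OF Cons.prems(1) this fl_cst_seqs] obtain P1 where
    P1: "step (gDelta n u v) P Tau P1" "fl P1 = Some (MM + {#cW w 0 # ys#})" by blast
  have "suffix w (u k) \<or> suffix w (v k)" using Cons.prems(2) by (meson suffix_ConsD)
  from Cons.IH[OF P1(2) this Cons.prems(3)] obtain P' where
    "tau_steps (gDelta n u v) P1 P'" "fl P' = Some (MM + th ys)" by blast
  then show ?case using P1(1) unfolding tau_steps_def by (meson converse_rtranclp_into_rtranclp)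
qed

lemma emit_letters:
  assumes "fl P = Some (MM + {#cW w k # ys#})" "suffix w (u k) \<or> suffix w (v k)" "k \<in> {1..n}"
  shows "\<exists>P'. wtr (gDelta n u v) P (map Sym w) P' \<and> fl P' = Some (MM + {#cW [] k # ys#})"
  using assms
proof (induction w arbitrary: P)
  case Nil
  have "wtr (gDelta n u v) P [] P" by (rule wtr_nil)
  then show ?case using Nil by auto
next
  case (Cons a w)
  have "isW n u v (cW (a # w) k)" unfolding isW_def using Cons.prems(2,3) by auto
  then have "gRule n u v (cW (a # w) k) (Act (Sym a)) (Cst (cW w k))" by (rule gRule.intros(36)[OF Cons.prems(3)])
  from step_at[OF Cons.prems(1) this fl_cst_seqs] obtain P1 where
    P1: "step (gDelta n u v) P (Act (Sym a)) P1" "fl P1 = Some (MM + {#cW w k # ys#})" by blast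
  have "suffix w (u k) \<or> suffix w (v k)" using Cons.prems(2) by (meson suffix_ConsD)
  from Cons.IH[OF P1(2) this Cons.prems(3)] obtain P' where
    "wtr (gDelta n u v) P1 (map Sym w) P'" "fl P' = Some (MM + {#cW [] k # ys#})" by blast
  then show ?case using P1(1) wtr_act by (metis list.simps(9))
qed

definition validUV :: "nat \<Rightarrow> 's gcon \<Rightarrow> bool" where
  "validUV n x \<longleftrightarrow> (\<exists>k\<in>{1..n}. x = cU k \<or> x = cV k)"

lemma emit_thread:
  assumes "\<forall>x\<in>set ys. validUV n x" "fl P = Some (M0 + th ys)"
  shows "(\<exists>P'. wtr (gDelta n u v) P (map Num (ncap ys)) P' \<and> fl P' = Some M0) \<and>
         (\<exists>P'. wtr (gDelta n u v) P (map Sym (lcap u v ys)) P' \<and> fl P' = Some M0)"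
  using assms
proof (induction ys arbitrary: P)
  case Nil
  have "wtr (gDelta n u v) P [] P" by (rule wtr_nil)
  then show ?case using Nil by (auto simp: th_def ncap_def lcap_def)
next
  case (Cons x ys)
  from Cons.prems(1) obtain k where k: "k \<in> {1..n}" and x: "x = cU k \<or> x = cV k"
    unfolding validUV_def by auto
  define w where "w = (if x = cU k then u k else v k)"
  have sw: "suffix w (u k) \<or> suffix w (v k)" unfolding w_def by auto
  have r1: "gRule n u v x Tau (Cst (cW w k))"
    using x
  proof
    assume "x = cU k" then show ?thesis using gRule.intros(34)[OF k] unfolding w_def by simp
  next
    assume "x = cV k" then show ?thesis using gRule.intros(35)[OF k] unfolding w_def by simp
  qed
  have fl0: "fl P = Some (M0 + {#x # ys#})" using Cons.prems(2) by (simp add: th_def)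
  from step_at[OF fl0 r1 fl_cst_seqs] obtain P1 where
    P1: "step (gDelta n u v) P Tau P1" "fl P1 = Some (M0 + {#cW w k # ys#})" by blast
  have isWk: "isW n u v (cW w k)" unfolding isW_def using sw k by auto
  have IHs: "\<forall>x\<in>set ys. validUV n x" using Cons.prems(1) by auto
  have nc: "ncap (x # ys) = k # ncap ys" and lc: "lcap u v (x # ys) = w @ lcap u v ys"
    using x k unfolding ncap_def lcap_def w_def by auto
  show ?case
  proof
    have r2: "gRule n u v (cW w k) (Act (Num k)) (Cst (cW w 0))" by (rule gRule.intros(38)[OF k isWk])
    from step_at[OF P1(2) r2 fl_cst_seqs] obtain P2 where
      P2: "step (gDelta n u v) P1 (Act (Num k)) P2" "fl P2 = Some (M0 + {#cW w 0 # ys#})" by blast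
    from emit_erase[where P=P2 and MM=M0 and w=w and ys=ys and u=u and v=v and k=k and n=n, OF P2(2) sw k] obtain P3 where
      P3: "tau_steps (gDelta n u v) P2 P3" "fl P3 = Some (M0 + th ys)" by blast
    from Cons.IH[OF IHs P3(2)] obtain P' where
      P': "wtr (gDelta n u v) P3 (map Num (ncap ys)) P'" "fl P' = Some M0" by blast
    have "wtr (gDelta n u v) P2 (map Num (ncap ys)) P'" using P3(1) P'(1) by (rule wtr_taus)
    then have "wtr (gDelta n u v) P1 (Num k # map Num (ncap ys)) P'" using P2(1) wtr_act by metis
    then have "wtr (gDelta n u v) P (map Num (ncap (x # ys))) P'"
      unfolding nc using P1(1) wtr_tau by (metis list.simps(9))
    then show "\<exists>P'. wtr (gDelta n u v) P (map Num (ncap (x # ys))) P' \<and> fl P' = Some M0" using P'(2) by blast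
  next
    from emit_letters[where P=P1 and MM=M0 and w=w and ys=ys and u=u and v=v and k=k and n=n, OF P1(2) sw k] obtain P2 where
      P2: "wtr (gDelta n u v) P1 (map Sym w) P2" "fl P2 = Some (M0 + {#cW [] k # ys#})" by blast
    have isW0: "isW n u v (cW [] k)" unfolding isW_def using k by auto
    have r3: "gRule n u v (cW [] k) Tau (Cst (cW [] 0))" by (rule gRule.intros(41)[OF k isW0])
    from step_at[OF P2(2) r3 fl_cst_seqs] obtain P3 where
      P3: "step (gDelta n u v) P2 Tau P3" "fl P3 = Some (M0 + {#cW [] 0 # ys#})" by blast
    from emit_erase[where P=P3 and MM=M0 and w="[]" and ys=ys and u=u and v=v and k=k and n=n, OF P3(2) _ k] obtain P4 where
      P4: "tau_steps (gDelta n u v) P3 P4" "fl P4 = Some (M0 + th ys)" by auto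
    from Cons.IH[OF IHs P4(2)] obtain P' where
      P': "wtr (gDelta n u v) P4 (map Sym (lcap u v ys)) P'" "fl P' = Some M0" by blast
    have "wtr (gDelta n u v) P3 (map Sym (lcap u v ys)) P'" using P4(1) P'(1) by (rule wtr_taus)
    then have "wtr (gDelta n u v) P2 (map Sym (lcap u v ys)) P'" by (rule wtr_tau[OF P3(1)])
    with P2(1) have "wtr (gDelta n u v) P1 (map Sym w @ map Sym (lcap u v ys)) P'" by (rule wtr_append)
    then have "wtr (gDelta n u v) P (map Sym (lcap u v (x # ys))) P'"
      unfolding lc using P1(1) wtr_tau by (metis map_append)
    then show "\<exists>P'. wtr (gDelta n u v) P (map Sym (lcap u v (x # ys))) P' \<and> fl P' = Some M0" using P'(2) by blast
  qed
qed




lemma anum_Num: "concat (map anum (map Num ns)) = ns"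
  by (induction ns) auto

lemma anum_Num': "concat (map (anum \<circ> Num) ns) = ns"
  by (induction ns) auto

lemma asym_Sym': "concat (map (asymc \<circ> Sym) ws) = ws"
  by (induction ws) auto

lemma asym_Sym: "concat (map asymc (map Sym ws)) = ws"
  by (induction ws) auto

lemma ncap_Cons_Z: "ncap (cZ # xs) = ncap xs" by (simp add: ncap_def)
lemma lcap_Cons_Z: "lcap u v (cZ # xs) = lcap u v xs" by (simp add: lcap_def)

lemma core:
  fixes u v :: "nat \<Rightarrow> 's list" and lam :: "'s gact"
  assumes wb: "weak_bisim (gDelta n u v) R" and rel: "R X Y"
    and fX: "fl X = Some {#[cC], cZ # xsA#}" and fY: "fl Y = Some {#[cC], cZ # xsB#}"
    and vA: "\<forall>x\<in>set xsA. validUV n x" and vB: "\<forall>x\<in>set xsB. validUV n x"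
    and lam: "lam = LamS \<or> lam = LamI"
  shows "(lam = LamS \<longrightarrow> subseq (ncap xsA) (ncap xsB)) \<and> (lam = LamI \<longrightarrow> subseq (lcap u v xsA) (lcap u v xsB))"
proof -
  define K :: "'s gcon" where "K = (if lam = LamS then cS else cI)"
  have K: "K = cS \<or> K = cI" unfolding K_def by simp
  have K3: "K \<in> {cC, cS, cI}" using K by auto
  have rC: "gRule n u v cC (Act lam) (Cst K)"
    using lam unfolding K_def by (auto intro: gRule.intros(16) gRule.intros(17))
  have fY': "fl Y = Some ({#cZ # xsB#} + {#[cC]#})" using fY by (simp add: add.commute)
  from step_at[OF fY' rC fl_cst_seqs[of K "[]"]] obtain A where
    A: "step (gDelta n u v) Y (Act lam) A" "fl A = Some ({#cZ # xsB#} + {#[K]#})" by blast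
  have fA: "fl A = Some (add_mset [K] (th (cZ # xsB)))" using A(2) by (simp add: th_def)
  from wb rel A(1) obtain B where wB: "wstep (gDelta n u v) X (Act lam) B" "R B A"
    unfolding weak_bisim_def by blast
  then obtain X1 X2 where X12: "tau_steps (gDelta n u v) X X1" "step (gDelta n u v) X1 (Act lam) X2"
    "tau_steps (gDelta n u v) X2 B"
    unfolding wstep_def by auto
  have xsAJ: "\<forall>x\<in>set xsA. isJ x" using vA unfolding validUV_def by auto
  have inv0: "InvB cC xsA {#cZ # xsA#} {#[cC], cZ # xsA#}"
    unfolding InvB_def by (intro conjI exI[where x="{#}"]) auto
  from invB_taus[OF X12(1) fX inv0 _ xsAJ] obtain M1 Zp1 where
    M1: "fl X1 = Some M1" "InvB cC xsA Zp1 M1" by auto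
  from invB_lamstep[OF X12(2) M1 lam] obtain M2 where
    M2: "fl X2 = Some M2" "InvB K xsA Zp1 M2" unfolding K_def by blast
  from invB_taus[OF X12(3) M2 K3 xsAJ] obtain MB Zp where
    MB: "fl B = Some MB" "InvB K xsA Zp MB" by blast
  have Zp: "Zp = {#cZ # xsA#}"
  proof (rule ccontr)
    assume "Zp \<noteq> {#cZ # xsA#}"
    then have Z0: "Zp = {#}" using MB(2) unfolding InvB_def by blast
    have fA2: "fl A = Some ({#[K]#} + {#cZ # xsB#})" using fA by (simp add: th_def)
    have rZ: "gRule n u v cZ (Act LamZ) Eps" by (rule gRule.intros(15))
    from step_at[OF fA2 rZ fl_eps_seqs] obtain A' where
      A': "step (gDelta n u v) A (Act LamZ) A'" by blast
    from wb wB(2) A' obtain B' where "wstep (gDelta n u v) B (Act LamZ) B'"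
      unfolding weak_bisim_def by blast
    then obtain B1 B2 where B12: "tau_steps (gDelta n u v) B B1" "step (gDelta n u v) B1 (Act LamZ) B2"
      unfolding wstep_def by auto
    from invB_taus[OF B12(1) MB(1) MB(2)[unfolded Z0] K3 xsAJ] obtain M3 Zp3 where
      "fl B1 = Some M3" "InvB K xsA Zp3 M3" "Zp3 = {#}" by blast
    then show False using invB_noZ[of B1 M3 K xsA n u v B2] B12(2) K3 by simp
  qed
  from MB(2) obtain J where J0: "MB = add_mset [K] (Zp + J)"
    unfolding InvB_def by blast
  have J: "MB = add_mset [K] ({#cZ # xsA#} + J)" using J0 Zp by simp
  have fB: "fl B = Some (add_mset [K] J + {#cZ # xsA#})" using MB(1) J by (simp add: add.commute)
  have rZ: "gRule n u v cZ (Act LamZ) Eps" by (rule gRule.intros(15))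
  from step_at[OF fB rZ fl_eps_seqs] obtain B' where
    B': "step (gDelta n u v) B (Act LamZ) B'" "fl B' = Some (add_mset [K] J + th xsA)" by blast
  from emit_thread[OF vA B'(2)] obtain Bn Bl where
    Bn: "wtr (gDelta n u v) B' (map Num (ncap xsA)) Bn" and
    Bl: "wtr (gDelta n u v) B' (map Sym (lcap u v xsA)) Bl" by blast
  have WB: "\<forall>x\<in>set (cZ # xsB). isWc x" using vB unfolding validUV_def by auto
  show ?thesis
  proof (intro conjI impI)
    assume ls: "lam = LamS"
    then have KS: "K = cS" unfolding K_def by simp
    have "wtr (gDelta n u v) B (LamZ # map Num (ncap xsA)) Bn" using B'(1) Bn by (rule wtr_act)
    from bisim_wtr[OF wb this wB(2)] obtain A2 where
      wA: "wtr (gDelta n u v) A (LamZ # map Num (ncap xsA)) A2" by blast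
    have nS: "LamS \<notin> set (LamZ # map Num (ncap xsA) :: 's gact list)" "LamI \<notin> set (LamZ # map Num (ncap xsA) :: 's gact list)"
      by auto
    have
      "K = cS \<longrightarrow> subseq (concat (map anum (LamZ # map Num (ncap xsA) :: 's gact list))) (ncap (cZ # xsB))"
      using clean_trace[OF wA fA WB K nS] by (rule conjunct1)
    then show "subseq (ncap xsA) (ncap xsB)" using KS by (simp add: anum_Num' ncap_Cons_Z)
  next
    assume li: "lam = LamI"
    then have KI: "K = cI" unfolding K_def by simp
    have "wtr (gDelta n u v) B (LamZ # map Sym (lcap u v xsA)) Bl" using B'(1) Bl by (rule wtr_act)
    from bisim_wtr[OF wb this wB(2)] obtain A2 where
      wA: "wtr (gDelta n u v) A (LamZ # map Sym (lcap u v xsA)) A2" by blast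
    have nS: "LamS \<notin> set (LamZ # map Sym (lcap u v xsA) :: 's gact list)" "LamI \<notin> set (LamZ # map Sym (lcap u v xsA) :: 's gact list)"
      by auto
    have
      "K = cI \<longrightarrow> subseq (concat (map asymc (LamZ # map Sym (lcap u v xsA)))) (lcap u v (cZ # xsB))"
      using clean_trace[OF wA fA WB K nS] by (rule conjunct2)
    then show "subseq (lcap u v xsA) (lcap u v xsB)" using KI by (simp add: asym_Sym' lcap_Cons_Z)
  qed
qed

lemma ncap_V: "ncap (map cV xs) = xs" by (induction xs) (auto simp: ncap_def)
lemma ncap_U: "ncap (map cU xs) = xs" by (induction xs) (auto simp: ncap_def)
lemma lcap_V: "lcap u v (map cV xs) = concat (map v xs)" by (induction xs) (auto simp: lcap_def)
lemma lcap_U: "lcap u v (map cU xs) = concat (map u xs)" by (induction xs) (auto simp: lcap_def)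
lemma ncap_app: "ncap (a @ b) = ncap a @ ncap b" by (simp add: ncap_def)
lemma lcap_app: "lcap u v (a @ b) = lcap u v a @ lcap u v b" by (simp add: lcap_def)

theorem lemma8:
  fixes n :: nat and u v :: "nat \<Rightarrow> ('s::finite) list"
    and vs1 vs2 us2 :: "nat list"
  assumes "CARD('s) \<ge> 2"
    and "\<forall>k\<in>{1..n}. u k \<noteq> [] \<and> v k \<noteq> []"
    and "set vs1 \<subseteq> {1..n}" and "set vs2 \<subseteq> {1..n}"
    and "set us2 \<subseteq> {1..n}" and "us2 \<noteq> []"
    and "wbisimilar (gDelta n u v)
           (Par (Cst cC) (Seq (Cst cZ) (seqs (map cV vs1))))
           (Par (Cst cC) (Seq (Cst cZ) (Seq (seqs (map cV vs2)) (seqs (map cU us2)))))"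
  shows "pcp_solvable n u v"
proof -
  define X :: "'s gcon proc" where "X = Par (Cst cC) (Seq (Cst cZ) (seqs (map cV vs1)))"
  define Y :: "'s gcon proc" where "Y = Par (Cst cC) (Seq (Cst cZ) (Seq (seqs (map cV vs2)) (seqs (map cU us2))))"
  define xsA where "xsA = map (cV :: nat \<Rightarrow> 's gcon) vs1"
  define xsB where "xsB = map (cV :: nat \<Rightarrow> 's gcon) vs2 @ map cU us2"
  obtain R where wb: "weak_bisim (gDelta n u v) R" and rel: "R X Y"
    using assms(7) unfolding wbisimilar_def X_def Y_def by blast
  have sc1: "\<And>xs. sc (Some {#[cZ]#}) (Some (th xs)) = Some {#cZ # xs#}"
    by (simp add: th_def)
  have fX: "fl X = Some {#[cC], cZ # xsA#}"
    unfolding X_def xsA_def by (simp add: fl_seqs sc1)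
  have fY: "fl Y = Some {#[cC], cZ # xsB#}"
    unfolding Y_def xsB_def by (simp add: fl_seqs sc_th sc1)
  have vA: "\<forall>x\<in>set xsA. validUV n x" using assms(3) unfolding xsA_def validUV_def by auto
  have vB: "\<forall>x\<in>set xsB. validUV n x" using assms(4,5) unfolding xsB_def validUV_def by auto
  have wb': "weak_bisim (gDelta n u v) (\<lambda>P Q. R Q P)" using wb by (rule weak_bisim_conv)
  have rel': "(\<lambda>P Q. R Q P) Y X" using rel by simp
  have c1: "(LamS = LamS \<longrightarrow> subseq (ncap xsA) (ncap xsB)) \<and> (LamS = LamI \<longrightarrow> subseq (lcap u v xsA) (lcap u v xsB))"
    using core[OF wb rel fX fY vA vB, of LamS] by simp
  have c2: "(LamS = LamS \<longrightarrow> subseq (ncap xsB) (ncap xsA)) \<and> (LamS = LamI \<longrightarrow> subseq (lcap u v xsB) (lcap u v xsA))"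
    using core[OF wb' rel' fY fX vB vA, of LamS] by simp
  have c3: "(LamI = LamS \<longrightarrow> subseq (ncap xsA) (ncap xsB)) \<and> (LamI = LamI \<longrightarrow> subseq (lcap u v xsA) (lcap u v xsB))"
    using core[OF wb rel fX fY vA vB, of LamI] by simp
  have c4: "(LamI = LamS \<longrightarrow> subseq (ncap xsB) (ncap xsA)) \<and> (LamI = LamI \<longrightarrow> subseq (lcap u v xsB) (lcap u v xsA))"
    using core[OF wb' rel' fY fX vB vA, of LamI] by simp
  have "ncap xsA = ncap xsB" using c1 c2 subseq_order.antisym by auto
  then have e1: "vs1 = vs2 @ us2" unfolding xsA_def xsB_def by (simp add: ncap_V ncap_U ncap_app)
  have "lcap u v xsA = lcap u v xsB" using c3 c4 subseq_order.antisym by auto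
  then have e2: "concat (map v vs1) = concat (map v vs2) @ concat (map u us2)"
    unfolding xsA_def xsB_def by (simp add: lcap_V lcap_U lcap_app)
  from e1 e2 have "concat (map u us2) = concat (map v us2)" by simp
  then show ?thesis unfolding pcp_solvable_def using assms(5,6) by blast
qed


end
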